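(* Let $\alpha,\beta\in(0,1)$ and let $\mathcal F\subseteq\mathcal F^0(\mathbb R^2)$ be any class of bivariate distributions containing all bivariate normal distributions together with all their (finite) mixtures. Then each of the functionals $F_{X,Y}\mapsto\mathrm{CoVaR}_{\alpha|\beta}(F_{X,Y})$, $F_{X,Y}\mapsto\mathrm{CoES}_{\alpha|\beta}(F_{X,Y})$ and $F_{X,Y}\mapsto\mathrm{MES}_\beta(F_{X,Y})$ is neither identifiable nor elicitable on $\mathcal F$ (i.e., there is neither a strict $\mathcal F$-identification function $\mathbb R\times\mathbb R^2\to\mathbb R^m$ nor a strictly $\mathcal F$-consistent real-valued scoring function for it).
   Context: $\mathcal F^0(\mathbb R^d)$ is the set of all probability distributions on $\mathbb R^d$, identified with cdfs. For a cdf $F$ and $\beta\in[0,1]$, $\mathrm{VaR}_\beta(F)=\inf\{x\in\mathbb R:F(x)\ge\beta\}$ (the lower $\beta$-quantile). For $(X,Y)\sim F_{X,Y}$ with marginals $F_X,F_Y$ and $\beta\in[0,1)$, define the cdf $F_{Y\mid X\succcurlyeq\mathrm{VaR}_\beta(X)}(y)=\frac1{1-\beta}\big[P\{Y\le y,X>\mathrm{VaR}_\beta(X)\}+P\{Y\le y\mid X=\mathrm{VaR}_\beta(X)\}\,(1-\beta-P\{X>\mathrm{VaR}_\beta(X)\})\big]$, where the second summand is $0$ if $P\{X>\mathrm{VaR}_\beta(X)\}=1-\beta$ (it equals the conditional cdf of $Y$ given $X\ge\mathrm{VaR}_\beta(X)$ when $F_X$ is continuous). Then $\mathrm{CoVaR}_{\alpha|\beta}(F_{X,Y})=\mathrm{VaR}_\alpha(F_{Y\mid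 X\succcurlyeq\mathrm{VaR}_\beta(X)})$, $\mathrm{CoES}_{\alpha|\beta}(F_{X,Y})=\frac1{1-\alpha}\int_\alpha^1\mathrm{CoVaR}_{\gamma|\beta}(F_{X,Y})\,\mathrm d\gamma\in(-\infty,\infty]$, $\mathrm{MES}_\beta(F_{X,Y})=\int_0^1\mathrm{CoVaR}_{\gamma|\beta}(F_{X,Y})\,\mathrm d\gamma$ (the mean of $F_{Y\mid X\succcurlyeq\mathrm{VaR}_\beta(X)}$). Identification functions/strict consistency: a map $V$ with $\int V(r,\bm y)\,\mathrm dF(\bm y)=0$ iff $r=T(F)$ for all $F\in\mathcal F$; a real score $S$ with $\int S(T(F),\bm y)\,\mathrm dF<\int S(r,\bm y)\,\mathrm dF$ for all $r\ne T(F)$, $F\in\mathcal F$ (integrability assumed). *)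

theory Defs
  imports "HOL-Probability.Probability"
begin

definition prob_dists2 :: "(real \<times> real) measure set" where
  "prob_dists2 = {P. prob_space P \<and> sets P = sets borel}"

definition cdf_VaR :: "(real \<Rightarrow> real) \<Rightarrow> real \<Rightarrow> real" where
  "cdf_VaR G b = Inf {x. G x \<ge> b}"

definition VaR_X :: "real \<Rightarrow> (real \<times> real) measure \<Rightarrow> real" where
  "VaR_X b F = cdf_VaR (\<lambda>x. measure F {p. fst p \<le> x}) b"

text \<open>The cdf of Y given X "\<succeq>" VaR_beta(X), literally as in the paper.\<close>
definition cond_cdf :: "real \<Rightarrow> (real \<times> real) measure \<Rightarrow> real \<Rightarrow> real" where
  "cond_cdf b F y =
     (let v = VaR_X b F;
          pgt = measure F {p. fst p > v};
          peq = measure F {p. fst p = v}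
      in (measure F {p. snd p \<le> y \<and> fst p > v}
          + (if pgt = 1 - b then 0
             else (measure F {p. snd p \<le> y \<and> fst p = v} / peq) * (1 - b - pgt))) / (1 - b))"

definition CoVaR :: "real \<Rightarrow> real \<Rightarrow> (real \<times> real) measure \<Rightarrow> real" where
  "CoVaR a b F = cdf_VaR (cond_cdf b F) a"

text \<open>Extended-real Lebesgue integral of f over A: positive part minus negative part
  (left unspecified in the meaningless case \<infinity> - \<infinity>).\<close>
definition ext_integral :: "real set \<Rightarrow> (real \<Rightarrow> real) \<Rightarrow> ereal" where
  "ext_integral A f =
     (let pp = (\<integral>\<^sup>+x\<in>A. ennreal (f x) \<partial>lborel);
          nn = (\<integral>\<^sup>+x\<in>A. ennreal (- f x) \<partial>lborel)
      in if pp = \<infinity> \<and> nn = \<infinity> then undefined else enn2ereal pp - enn2ereal nn)"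

definition CoES :: "real \<Rightarrow> real \<Rightarrow> (real \<times> real) measure \<Rightarrow> ereal" where
  "CoES a b F = ereal (1 / (1 - a)) * ext_integral {a<..<1} (\<lambda>g. CoVaR g b F)"

definition MES :: "real \<Rightarrow> (real \<times> real) measure \<Rightarrow> ereal" where
  "MES b F = ext_integral {0<..<1} (\<lambda>g. CoVaR g b F)"

definition strict_identification ::
  "(real \<Rightarrow> 'a \<Rightarrow> 'b::{banach,second_countable_topology}) \<Rightarrow> ('a measure \<Rightarrow> ereal) \<Rightarrow> 'a measure set \<Rightarrow> bool" where
  "strict_identification V T C \<longleftrightarrow>
     (\<forall>F\<in>C. \<forall>r. integrable F (V r) \<and> ((\<integral>y. V r y \<partial>F) = 0 \<longleftrightarrow> T F = ereal r))"

definition strictly_consistent ::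
  "(real \<Rightarrow> 'a \<Rightarrow> real) \<Rightarrow> ('a measure \<Rightarrow> ereal) \<Rightarrow> 'a measure set \<Rightarrow> bool" where
  "strictly_consistent S T C \<longleftrightarrow>
     (\<forall>F\<in>C. (\<forall>r. integrable F (S r)) \<and>
        (\<forall>t r. T F = ereal t \<longrightarrow> r \<noteq> t \<longrightarrow> (\<integral>y. S t y \<partial>F) < (\<integral>y. S r y \<partial>F)))"

definition elicitable :: "('a measure \<Rightarrow> ereal) \<Rightarrow> 'a measure set \<Rightarrow> bool" where
  "elicitable T C \<longleftrightarrow> (\<exists>S. strictly_consistent S T C)"

definition bvn_density :: "real \<Rightarrow> real \<Rightarrow> real \<Rightarrow> real \<Rightarrow> real \<Rightarrow> real \<times> real \<Rightarrow> real" where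
  "bvn_density m1 m2 s1 s2 \<rho> p =
     (let u = (fst p - m1) / s1; w = (snd p - m2) / s2
      in exp (- (u\<^sup>2 - 2 * \<rho> * u * w + w\<^sup>2) / (2 * (1 - \<rho>\<^sup>2))) / (2 * pi * s1 * s2 * sqrt (1 - \<rho>\<^sup>2)))"

definition bivariate_normal :: "(real \<times> real) measure \<Rightarrow> bool" where
  "bivariate_normal P \<longleftrightarrow>
     (\<exists>m1 m2 s1 s2 \<rho>. s1 > 0 \<and> s2 > 0 \<and> \<bar>\<rho>\<bar> < 1 \<and>
        P = density lborel (\<lambda>p. ennreal (bvn_density m1 m2 s1 s2 \<rho> p)))"

text \<open>Finite mixtures of bivariate normals (includes the normals themselves, n = 1).\<close>
definition normal_mixture :: "(real \<times> real) measure \<Rightarrow> bool" where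
  "normal_mixture P \<longleftrightarrow> sets P = sets borel \<and>
     (\<exists>(n::nat) w Q. (\<forall>i<n. bivariate_normal (Q i) \<and> 0 \<le> w i) \<and> (\<Sum>i<n. w i) = (1::real) \<and>
        (\<forall>A\<in>sets borel. emeasure P A = (\<Sum>i<n. ennreal (w i) * emeasure (Q i) A)))"

end

theory Submission
  imports Defs
begin


definition NM :: "real \<Rightarrow> real \<Rightarrow> real measure" where
  "NM m s = density lborel (\<lambda>x. ennreal (normal_density m s x))"

definition Psi :: "real \<Rightarrow> real \<Rightarrow> real \<Rightarrow> real" where
  "Psi m s x = measure (NM m s) {..x}"

abbreviation "Phi \<equiv> Psi 0 1"

lemma prob_NM: "0 < s \<Longrightarrow> prob_space (NM m s)"
  unfolding NM_def by (rule prob_space_normal_density)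

lemma sets_NM[simp]: "sets (NM m s) = sets borel"
  unfolding NM_def by simp

lemma real_distribution_NM: "0 < s \<Longrightarrow> real_distribution (NM m s)"
  unfolding real_distribution_def real_distribution_axioms_def using prob_NM by simp

lemma emeasure_NM: "A \<in> sets borel \<Longrightarrow> emeasure (NM m s) A = (\<integral>\<^sup>+x. ennreal (normal_density m s x) * indicator A x \<partial>lborel)"
  unfolding NM_def by (subst emeasure_density) auto

lemma Psi_affine:
  assumes s: "0 < s"
  shows "Psi m s x = Phi ((x - m) / s)"
proof -
  have "emeasure (NM m s) {..x} = (\<integral>\<^sup>+t. ennreal (normal_density m s t) * indicator {..x} t \<partial>lborel)"
    by (simp add: emeasure_NM)
  also have "\<dots> = ennreal \<bar>s\<bar> * (\<integral>\<^sup>+u. ennreal (normal_density m s (m + s * u)) * indicator {..x} (m + s * u) \<partial>lborel)"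
    by (rule nn_integral_real_affine) (use s in auto)
  also have "\<dots> = (\<integral>\<^sup>+u. ennreal (normal_density 0 1 u) * indicator {..(x-m)/s} u \<partial>lborel)"
  proof -
    have "ennreal \<bar>s\<bar> * (ennreal (normal_density m s (m + s * u)) * indicator {..x} (m + s * u))
        = ennreal (normal_density 0 1 u) * indicator {..(x-m)/s} u" for u
    proof -
      have e1: "\<bar>s\<bar> * normal_density m s (m + s * u) = normal_density 0 1 u"
        using s by (simp add: normal_density_def real_sqrt_mult field_simps power2_eq_square)
      have e2: "(m + s * u \<le> x) = (u \<le> (x - m)/s)" using s by (simp add: field_simps)
      show ?thesis using e1 e2 s
        by (auto simp: indicator_def ennreal_mult'[symmetric] simp del: ennreal_mult')
    qed
    then show ?thesis by (subst nn_integral_cmult[symmetric]) (auto simp: mult.assoc)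
  qed
  also have "\<dots> = emeasure (NM 0 1) {..(x-m)/s}" by (simp add: emeasure_NM)
  finally show ?thesis unfolding Psi_def measure_def by simp
qed



lemma emeasure_NM_singleton: "emeasure (NM m s) {x} = 0"
proof -
  have "emeasure (NM m s) {x} = (\<integral>\<^sup>+t. ennreal (normal_density m s t) * indicator {x} t \<partial>lborel)"
    by (simp add: emeasure_NM)
  also have "\<dots> = 0"
    by (subst nn_integral_0_iff_AE) (use AE_lborel_singleton[of x] in \<open>auto elim!: eventually_mono\<close>)
  finally show ?thesis .
qed

lemma Phi_cont: "isCont Phi x"
proof -
  interpret real_distribution "NM 0 1" by (rule real_distribution_NM) simp
  have "isCont (cdf (NM 0 1)) x" using isCont_cdf emeasure_NM_singleton
    by (simp add: measure_def)
  moreover have "cdf (NM 0 1) = Phi" by (simp add: cdf_def Psi_def fun_eq_iff)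
  ultimately show ?thesis by simp
qed

lemma Phi_lim_top: "(Phi \<longlongrightarrow> 1) at_top"
proof -
  interpret real_distribution "NM 0 1" by (rule real_distribution_NM) simp
  have "cdf (NM 0 1) = Phi" by (simp add: cdf_def Psi_def fun_eq_iff)
  with cdf_lim_at_top_prob show ?thesis by simp
qed

lemma Phi_lim_bot: "(Phi \<longlongrightarrow> 0) at_bot"
proof -
  interpret real_distribution "NM 0 1" by (rule real_distribution_NM) simp
  have "cdf (NM 0 1) = Phi" by (simp add: cdf_def Psi_def fun_eq_iff)
  with cdf_lim_at_bot show ?thesis by simp
qed

lemma Phi_strict: assumes "x < y" shows "Phi x < Phi y"
proof -
  interpret prob_space "NM 0 1" by (rule prob_NM) simp
  have pos: "emeasure (NM 0 1) {x<..y} \<noteq> 0"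
  proof
    assume "emeasure (NM 0 1) {x<..y} = 0"
    then have "(\<integral>\<^sup>+t. ennreal (normal_density 0 1 t) * indicator {x<..y} t \<partial>lborel) = 0"
      by (simp add: emeasure_NM)
    then have "AE t in lborel. ennreal (normal_density 0 1 t) * indicator {x<..y} t = 0"
      by (subst (asm) nn_integral_0_iff_AE) auto
    then have "AE t in lborel. t \<notin> {x<..y}"
      by (rule eventually_mono) (metis indicator_simps(1) mult.right_neutral ennreal_eq_0_iff normal_density_pos[of 1 0] zero_less_one not_less order_refl)
    then have "emeasure lborel {x<..y} = 0"
      by (subst (asm) AE_iff_measurable[where N="{x<..y}"]) auto
    with assms show False by simp
  qed
  have "Phi y = measure (NM 0 1) ({..x} \<union> {x<..y})"
    unfolding Psi_def using assms by (intro arg_cong[where f="measure _"]) auto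
  also have "\<dots> = Phi x + measure (NM 0 1) {x<..y}"
    unfolding Psi_def by (subst finite_measure_Union) auto
  moreover have "measure (NM 0 1) {x<..y} \<noteq> 0" using pos emeasure_eq_measure[of "{x<..y}"] by auto
  ultimately show ?thesis using measure_nonneg[of "NM 0 1" "{x<..y}"] by linarith
qed

lemma Phi_mono: "x \<le> y \<Longrightarrow> Phi x \<le> Phi y"
  using Phi_strict[of x y] by (cases "x = y") auto

lemma Phi_bounds: "0 \<le> Phi x" "Phi x \<le> 1"
proof -
  interpret prob_space "NM 0 1" by (rule prob_NM) simp
  show "0 \<le> Phi x" "Phi x \<le> 1" unfolding Psi_def by auto
qed



lemma second_moment_nn: "(\<integral>\<^sup>+t. ennreal (normal_density 0 1 t * t^2) \<partial>lborel) = 1"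
proof -
  have "integrable lborel (\<lambda>t. normal_density 0 1 t * t^2)"
    using integrable_std_normal_moment[of 2] by simp
  moreover have "(\<integral>t. normal_density 0 1 t * t^2 \<partial>lborel) = 1"
    using integral_std_normal_moment_even[of 1] by simp
  ultimately show ?thesis by (subst nn_integral_eq_integral) auto
qed

lemma tail_gen:
  assumes A: "A \<in> sets borel" and x: "x \<noteq> 0" and le: "\<And>t. t \<in> A \<Longrightarrow> x^2 \<le> t^2"
  shows "measure (NM 0 1) A \<le> 1 / x^2"
proof -
  interpret prob_space "NM 0 1" by (rule prob_NM) simp
  have "emeasure (NM 0 1) A = (\<integral>\<^sup>+t. ennreal (normal_density 0 1 t) * indicator A t \<partial>lborel)"
    using A by (simp add: emeasure_NM)
  also have "\<dots> \<le> (\<integral>\<^sup>+t. ennreal (1 / x^2) * ennreal (normal_density 0 1 t * t^2) \<partial>lborel)"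
  proof (rule nn_integral_mono)
    fix t
    show "ennreal (normal_density 0 1 t) * indicator A t \<le> ennreal (1 / x^2) * ennreal (normal_density 0 1 t * t^2)"
    proof (cases "t \<in> A")
      case True
      then have "normal_density 0 1 t \<le> 1 / x^2 * (normal_density 0 1 t * t^2)"
        using le[OF True] x by (simp add: field_simps mult_left_mono)
      then show ?thesis using True
        by (simp add: ennreal_mult'[symmetric] ennreal_leI)
    qed simp
  qed
  also have "\<dots> = ennreal (1 / x^2)"
    by (subst nn_integral_cmult) (auto simp: second_moment_nn)
  finally have "ennreal (measure (NM 0 1) A) \<le> ennreal (1/x^2)"
    using emeasure_eq_measure by simp
  then show ?thesis using x by (simp add: ennreal_le_iff2)
qed

lemma Phi_upper_tail: assumes "0 < x" shows "1 - Phi x \<le> 1 / x^2"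
proof -
  interpret prob_space "NM 0 1" by (rule prob_NM) simp
  have "1 - Phi x = measure (NM 0 1) (space (NM 0 1) - {..x})"
    unfolding Psi_def by (subst prob_compl) auto
  also have "space (NM 0 1) - {..x} = {x<..}" by (auto simp: NM_def)
  finally have e: "1 - Phi x = measure (NM 0 1) {x<..}" .
  have "measure (NM 0 1) {x<..} \<le> 1 / x^2"
    by (rule tail_gen) (use assms in \<open>auto intro: power_mono\<close>)
  with e show ?thesis by simp
qed

lemma Phi_lower_tail: assumes "x < 0" shows "Phi x \<le> 1 / x^2"
  unfolding Psi_def
proof (rule tail_gen)
  fix t assume "t \<in> {..x}"
  then have "-x \<le> -t" by simp
  then have "(-x)^2 \<le> (-t)^2" by (rule power_mono) (use assms in simp)
  then show "x^2 \<le> t^2" by simp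
qed (use assms in auto)



lemma quantile_unique:
  fixes H :: "real \<Rightarrow> real"
  assumes mono: "\<And>x y. x < y \<Longrightarrow> H x < H y" and t: "H t = g"
  shows "cdf_VaR H g = t"
proof -
  have "{x. g \<le> H x} = {t..}"
  proof (intro set_eqI iffI)
    fix x assume "x \<in> {x. g \<le> H x}"
    then show "x \<in> {t..}" using mono[of x t] t by (cases "x < t") auto
  next
    fix x assume "x \<in> {t..}"
    then show "x \<in> {x. g \<le> H x}" using mono[of t x] t by (cases "x = t") auto
  qed
  then show ?thesis unfolding cdf_VaR_def by simp
qed

definition cdflike :: "(real \<Rightarrow> real) \<Rightarrow> bool" where
  "cdflike H \<longleftrightarrow> (\<forall>x. isCont H x) \<and> (\<forall>x y. x < y \<longrightarrow> H x < H y) \<and> (H \<longlongrightarrow> 0) at_bot \<and> (H \<longlongrightarrow> 1) at_top"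

lemma quantile_exists:
  assumes "cdflike H" "0 < g" "g < 1"
  shows "\<exists>t. H t = g"
proof -
  from assms have c: "\<And>x. isCont H x" and b: "(H \<longlongrightarrow> 0) at_bot" and tp: "(H \<longlongrightarrow> 1) at_top"
    by (auto simp: cdflike_def)
  from order_tendstoD(2)[OF b \<open>0 < g\<close>] obtain a where a: "\<And>x. x \<le> a \<Longrightarrow> H x < g"
    by (auto simp: eventually_at_bot_linorder)
  from order_tendstoD(1)[OF tp \<open>g < 1\<close>] obtain b where bb: "\<And>x. x \<ge> b \<Longrightarrow> H x > g"
    by (auto simp: eventually_at_top_linorder)
  have "H a \<le> g" "g \<le> H (max a b)" using a[of a] bb[of "max a b"] by auto
  moreover have "a \<le> max a b" by simp
  moreover have "continuous_on {a..max a b} H" using c by (simp add: continuous_at_imp_continuous_on)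
  ultimately show ?thesis using IVT'[of H a g "max a b"] by blast
qed

lemma quantile_char:
  assumes "cdflike H" "0 < g" "g < 1"
  shows "H (cdf_VaR H g) = g"
proof -
  obtain t where "H t = g" using quantile_exists[OF assms] by blast
  moreover have "cdf_VaR H g = t"
    by (rule quantile_unique) (use assms \<open>H t = g\<close> in \<open>auto simp: cdflike_def\<close>)
  ultimately show ?thesis by simp
qed

lemma lin_at_top: "0 < s \<Longrightarrow> filterlim (\<lambda>x::real. (x - m) / s) at_top at_top"
proof -
  assume s: "0 < s"
  have "filterlim (\<lambda>x::real. (1/s) * x) at_top at_top"
    by (rule filterlim_tendsto_pos_mult_at_top[OF tendsto_const _ filterlim_ident]) (use s in simp)
  then have "filterlim (\<lambda>x::real. (- m / s) + (1/s) * x) at_top at_top"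
    by (rule filterlim_tendsto_add_at_top[OF tendsto_const])
  then show ?thesis by (simp add: diff_divide_distrib)
qed

lemma lin_at_bot: "0 < s \<Longrightarrow> filterlim (\<lambda>x::real. (x - m) / s) at_bot at_bot"
proof -
  assume s: "0 < s"
  have "filterlim (\<lambda>x::real. (- x - (- m)) / s) at_top at_bot"
    by (rule filterlim_compose[OF lin_at_top[OF s] filterlim_uminus_at_top_at_bot])
  then have "filterlim (\<lambda>x::real. - ((x - m) / s)) at_top at_bot" by (simp add: minus_divide_left)
  then show ?thesis by (simp add: filterlim_uminus_at_bot)
qed


lemma cdflike_sum:
  fixes w m s :: "'i \<Rightarrow> real"
  assumes fin: "finite I" and w: "\<And>i. i \<in> I \<Longrightarrow> 0 \<le> w i" and sw: "(\<Sum>i\<in>I. w i) = 1"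
    and s: "\<And>i. i \<in> I \<Longrightarrow> 0 < s i"
  shows "cdflike (\<lambda>x. \<Sum>i\<in>I. w i * Phi ((x - m i) / s i))"
  unfolding cdflike_def
proof (intro conjI allI impI)
  fix x show "isCont (\<lambda>x. \<Sum>i\<in>I. w i * Phi ((x - m i) / s i)) x"
    by (intro continuous_intros isCont_o2[OF _ Phi_cont]) (auto dest: s)
next
  fix x y :: real assume xy: "x < y"
  have "\<exists>j\<in>I. 0 < w j"
  proof (rule ccontr)
    assume "\<not> (\<exists>j\<in>I. 0 < w j)"
    then have "\<forall>i\<in>I. w i = 0" using w by force
    then have "(\<Sum>i\<in>I. w i) = 0" by simp
    with sw show False by simp
  qed
  then obtain j where j: "j \<in> I" "0 < w j" by blast
  have "(\<Sum>i\<in>I. w i * Phi ((x - m i) / s i)) < (\<Sum>i\<in>I. w i * Phi ((y - m i) / s i))"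
  proof (rule sum_strict_mono_ex1[OF fin])
    show "\<forall>i\<in>I. w i * Phi ((x - m i) / s i) \<le> w i * Phi ((y - m i) / s i)"
    proof
      fix i assume i: "i \<in> I"
      have "Phi ((x - m i) / s i) \<le> Phi ((y - m i) / s i)"
        by (rule Phi_mono) (use s[OF i] xy in \<open>simp add: divide_right_mono\<close>)
      then show "w i * Phi ((x - m i) / s i) \<le> w i * Phi ((y - m i) / s i)"
        using w[OF i] by (rule mult_left_mono)
    qed
    show "\<exists>i\<in>I. w i * Phi ((x - m i) / s i) < w i * Phi ((y - m i) / s i)"
      using j s[OF j(1)] xy by (intro bexI[OF _ j(1)] mult_strict_left_mono Phi_strict divide_strict_right_mono) auto
  qed
  then show "(\<Sum>i\<in>I. w i * Phi ((x - m i) / s i)) < (\<Sum>i\<in>I. w i * Phi ((y - m i) / s i))" .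
next
  have "((\<lambda>x. \<Sum>i\<in>I. w i * Phi ((x - m i) / s i)) \<longlongrightarrow> (\<Sum>i\<in>I. w i * 0)) at_bot"
    by (intro tendsto_sum tendsto_mult tendsto_const filterlim_compose[OF Phi_lim_bot lin_at_bot]) (use s in auto)
  then show "((\<lambda>x. \<Sum>i\<in>I. w i * Phi ((x - m i) / s i)) \<longlongrightarrow> 0) at_bot" by simp
next
  have "((\<lambda>x. \<Sum>i\<in>I. w i * Phi ((x - m i) / s i)) \<longlongrightarrow> (\<Sum>i\<in>I. w i * 1)) at_top"
    by (intro tendsto_sum tendsto_mult tendsto_const filterlim_compose[OF Phi_lim_top lin_at_top]) (use s in auto)
  then show "((\<lambda>x. \<Sum>i\<in>I. w i * Phi ((x - m i) / s i)) \<longlongrightarrow> 1) at_top" using sw by simp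
qed



lemma prod_density_rect:
  fixes f g :: "real \<Rightarrow> real"
  assumes [measurable]: "f \<in> borel_measurable borel" "g \<in> borel_measurable borel"
    and A[measurable]: "A \<in> sets borel" and B[measurable]: "B \<in> sets borel"
    and nf: "\<And>x. 0 \<le> f x" and ng: "\<And>x. 0 \<le> g x"
  shows "emeasure (density lborel (\<lambda>p. ennreal (f (fst p) * g (snd p)))) {p. fst p \<in> A \<and> snd p \<in> B}
     = (\<integral>\<^sup>+x. ennreal (f x) * indicator A x \<partial>lborel) * (\<integral>\<^sup>+y. ennreal (g y) * indicator B y \<partial>lborel)"
proof -
  have S: "{p::real\<times>real. fst p \<in> A \<and> snd p \<in> B} = A \<times> B" by auto
  have "emeasure (density (lborel \<Otimes>\<^sub>M lborel) (\<lambda>p. ennreal (f (fst p) * g (snd p)))) (A \<times> B)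
      = (\<integral>\<^sup>+p. ennreal (f (fst p) * g (snd p)) * indicator (A \<times> B) p \<partial>(lborel \<Otimes>\<^sub>M lborel))"
    by (subst emeasure_density) auto
  also have "\<dots> = (\<integral>\<^sup>+p. (ennreal (f (fst p)) * indicator A (fst p)) * (ennreal (g (snd p)) * indicator B (snd p)) \<partial>(lborel \<Otimes>\<^sub>M lborel))"
    by (intro nn_integral_cong) (auto simp: indicator_def ennreal_mult' nf ng)
  also have "\<dots> = (\<integral>\<^sup>+x. \<integral>\<^sup>+y. (ennreal (f x) * indicator A x) * (ennreal (g y) * indicator B y) \<partial>lborel \<partial>lborel)"
    by (subst lborel.nn_integral_fst[symmetric]) auto
  also have "\<dots> = (\<integral>\<^sup>+x. (ennreal (f x) * indicator A x) * (\<integral>\<^sup>+y. ennreal (g y) * indicator B y \<partial>lborel) \<partial>lborel)"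
    by (subst nn_integral_cmult) auto
  also have "\<dots> = (\<integral>\<^sup>+x. ennreal (f x) * indicator A x \<partial>lborel) * (\<integral>\<^sup>+y. ennreal (g y) * indicator B y \<partial>lborel)"
    by (subst nn_integral_multc) auto
  finally show ?thesis using S by (simp add: lborel_prod)
qed

lemma nd_alt: "0 < s \<Longrightarrow> normal_density m s x = exp (-(x-m)\<^sup>2/(2 * s\<^sup>2)) / (sqrt (2 * pi) * s)"
  by (simp add: normal_density_def real_sqrt_mult)

lemma bvn0: assumes s1: "0 < s1" and s2: "0 < s2"
  shows "bvn_density m1 m2 s1 s2 0 p = normal_density m1 s1 (fst p) * normal_density m2 s2 (snd p)"
proof -
  have ex: "- (((fst p - m1) / s1)\<^sup>2 - 2 * 0 * ((fst p - m1) / s1) * ((snd p - m2) / s2) + ((snd p - m2) / s2)\<^sup>2) / (2 * (1 - 0\<^sup>2))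
      = -(fst p - m1)\<^sup>2/(2 * s1\<^sup>2) + -(snd p - m2)\<^sup>2/(2 * s2\<^sup>2)"
    by (simp add: power_divide field_simps)
  have dn: "2 * pi * s1 * s2 * sqrt (1 - 0\<^sup>2) = (sqrt (2 * pi) * s1) * (sqrt (2 * pi) * s2)"
    by (simp add: real_sqrt_mult[symmetric])
  show ?thesis
    unfolding bvn_density_def Let_def ex dn nd_alt[OF s1] nd_alt[OF s2] exp_add by simp
qed



lemma fst_meas[measurable]: "fst \<in> (borel :: (real\<times>real) measure) \<rightarrow>\<^sub>M borel"
  by (subst borel_prod[symmetric]) simp

lemma snd_meas[measurable]: "snd \<in> (borel :: (real\<times>real) measure) \<rightarrow>\<^sub>M borel"
  by (subst borel_prod[symmetric]) simp

definition mixd :: "nat \<Rightarrow> (nat\<Rightarrow>real) \<Rightarrow> (nat\<Rightarrow>real) \<Rightarrow> (nat\<Rightarrow>real) \<Rightarrow> (nat\<Rightarrow>real) \<Rightarrow> real\<times>real \<Rightarrow> real" where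
  "mixd n w mx sx my p = (\<Sum>i<n. w i * (normal_density (mx i) (sx i) (fst p) * normal_density (my i) 1 (snd p)))"

definition MixM :: "nat \<Rightarrow> (nat\<Rightarrow>real) \<Rightarrow> (nat\<Rightarrow>real) \<Rightarrow> (nat\<Rightarrow>real) \<Rightarrow> (nat\<Rightarrow>real) \<Rightarrow> (real\<times>real) measure" where
  "MixM n w mx sx my = density lborel (\<lambda>p. ennreal (mixd n w mx sx my p))"

definition Qc :: "real \<Rightarrow> real \<Rightarrow> real \<Rightarrow> (real\<times>real) measure" where
  "Qc a s b = density lborel (\<lambda>p. ennreal (normal_density a s (fst p) * normal_density b 1 (snd p)))"

definition mixok :: "nat \<Rightarrow> (nat\<Rightarrow>real) \<Rightarrow> (nat\<Rightarrow>real) \<Rightarrow> bool" where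
  "mixok n w sx \<longleftrightarrow> (\<forall>i<n. 0 \<le> w i \<and> 0 < sx i) \<and> (\<Sum>i<n. w i) = 1"

lemma mixd_nonneg: "mixok n w sx \<Longrightarrow> 0 \<le> mixd n w mx sx my p"
  unfolding mixd_def mixok_def by (auto intro!: sum_nonneg)

lemma sets_MixM[simp]: "sets (MixM n w mx sx my) = sets borel"
  unfolding MixM_def by simp

lemma emeasure_MixM:
  assumes ok: "mixok n w sx" and S[measurable]: "S \<in> sets borel"
  shows "emeasure (MixM n w mx sx my) S = (\<Sum>i<n. ennreal (w i) * emeasure (Qc (mx i) (sx i) (my i)) S)"
proof -
  have w: "\<And>i. i < n \<Longrightarrow> 0 \<le> w i" using ok by (auto simp: mixok_def)
  have "emeasure (MixM n w mx sx my) S = (\<integral>\<^sup>+p. ennreal (mixd n w mx sx my p) * indicator S p \<partial>lborel)"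
    unfolding MixM_def by (subst emeasure_density) (auto simp: mixd_def)
  also have "\<dots> = (\<integral>\<^sup>+p. (\<Sum>i<n. ennreal (w i) * (ennreal (normal_density (mx i) (sx i) (fst p) * normal_density (my i) 1 (snd p)) * indicator S p)) \<partial>lborel)"
  proof (intro nn_integral_cong)
    fix p
    have "ennreal (mixd n w mx sx my p) = (\<Sum>i<n. ennreal (w i * (normal_density (mx i) (sx i) (fst p) * normal_density (my i) 1 (snd p))))"
      unfolding mixd_def by (subst sum_ennreal) (auto intro!: mult_nonneg_nonneg w)
    then show "ennreal (mixd n w mx sx my p) * indicator S p = (\<Sum>i<n. ennreal (w i) * (ennreal (normal_density (mx i) (sx i) (fst p) * normal_density (my i) 1 (snd p)) * indicator S p))"
      by (simp add: sum_distrib_right ennreal_mult' w mult.assoc)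
  qed
  also have "\<dots> = (\<Sum>i<n. \<integral>\<^sup>+p. ennreal (w i) * (ennreal (normal_density (mx i) (sx i) (fst p) * normal_density (my i) 1 (snd p)) * indicator S p) \<partial>lborel)"
    by (subst nn_integral_sum) auto
  also have "\<dots> = (\<Sum>i<n. ennreal (w i) * emeasure (Qc (mx i) (sx i) (my i)) S)"
    unfolding Qc_def by (intro sum.cong refl, subst nn_integral_cmult) (auto simp: emeasure_density)
  finally show ?thesis .
qed

lemma emeasure_Qc_rect:
  assumes s: "0 < s" and [measurable]: "A \<in> sets borel" "B \<in> sets borel"
  shows "emeasure (Qc a s b) {p. fst p \<in> A \<and> snd p \<in> B} = ennreal (measure (NM a s) A * measure (NM b 1) B)"
proof -
  interpret p1: prob_space "NM a s" by (rule prob_NM[OF s])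
  interpret p2: prob_space "NM b 1" by (rule prob_NM) simp
  have "emeasure (Qc a s b) {p. fst p \<in> A \<and> snd p \<in> B} = emeasure (NM a s) A * emeasure (NM b 1) B"
    unfolding Qc_def by (subst prod_density_rect) (auto simp: emeasure_NM)
  then show ?thesis by (simp add: p1.emeasure_eq_measure p2.emeasure_eq_measure ennreal_mult')
qed

lemma emeasure_MixM_rect:
  assumes ok: "mixok n w sx" and [measurable]: "A \<in> sets borel" "B \<in> sets borel"
  shows "emeasure (MixM n w mx sx my) {p. fst p \<in> A \<and> snd p \<in> B}
     = ennreal (\<Sum>i<n. w i * measure (NM (mx i) (sx i)) A * measure (NM (my i) 1) B)"
proof -
  have w: "\<And>i. i < n \<Longrightarrow> 0 \<le> w i" and s: "\<And>i. i < n \<Longrightarrow> 0 < sx i" using ok by (auto simp: mixok_def)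
  have S: "{p::real\<times>real. fst p \<in> A \<and> snd p \<in> B} \<in> sets borel" by measurable
  show ?thesis
    unfolding emeasure_MixM[OF ok S]
    by (subst sum_ennreal[symmetric]) (auto intro!: sum.cong simp: emeasure_Qc_rect s w ennreal_mult' mult.assoc)
qed

lemma measure_MixM_rect:
  assumes ok: "mixok n w sx" and [measurable]: "A \<in> sets borel" "B \<in> sets borel"
  shows "measure (MixM n w mx sx my) {p. fst p \<in> A \<and> snd p \<in> B}
     = (\<Sum>i<n. w i * measure (NM (mx i) (sx i)) A * measure (NM (my i) 1) B)"
proof -
  have "0 \<le> (\<Sum>i<n. w i * measure (NM (mx i) (sx i)) A * measure (NM (my i) 1) B)"
    using ok by (auto intro!: sum_nonneg simp: mixok_def)
  then show ?thesis using emeasure_MixM_rect[OF assms, of mx my] by (simp add: measure_def)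
qed

lemma prob_MixM: assumes ok: "mixok n w sx" shows "prob_space (MixM n w mx sx my)"
proof
  have s: "\<And>i. i < n \<Longrightarrow> 0 < sx i" using ok by (auto simp: mixok_def)
  have "space (MixM n w mx sx my) = {p. fst p \<in> UNIV \<and> snd p \<in> UNIV}" by (simp add: MixM_def)
  then have "emeasure (MixM n w mx sx my) (space (MixM n w mx sx my)) = ennreal (\<Sum>i<n. w i * measure (NM (mx i) (sx i)) UNIV * measure (NM (my i) 1) UNIV)"
    using emeasure_MixM_rect[OF ok, of UNIV UNIV mx my] by simp
  also have "\<dots> = 1"
  proof -
    have "\<And>i. i < n \<Longrightarrow> measure (NM (mx i) (sx i)) UNIV = 1"
      using prob_space.prob_space[OF prob_NM[OF s]] by (simp add: NM_def)
    moreover have "\<And>i. measure (NM (my i) 1) UNIV = 1"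
      using prob_space.prob_space[OF prob_NM[of 1]] by (simp add: NM_def)
    ultimately show ?thesis using ok by (simp add: mixok_def)
  qed
  finally show "emeasure (MixM n w mx sx my) (space (MixM n w mx sx my)) = 1" .
qed

lemma normal_mixture_MixM: assumes ok: "mixok n w sx" shows "normal_mixture (MixM n w mx sx my)"
  unfolding normal_mixture_def
proof (intro conjI exI)
  show "sets (MixM n w mx sx my) = sets borel" by simp
  have s: "\<And>i. i < n \<Longrightarrow> 0 < sx i" and w: "\<And>i. i < n \<Longrightarrow> 0 \<le> w i" using ok by (auto simp: mixok_def)
  have Q: "Qc (mx i) (sx i) (my i) = density lborel (\<lambda>p. ennreal (bvn_density (mx i) (my i) (sx i) 1 0 p))" if "i < n" for i
    unfolding Qc_def using bvn0[OF s[OF that], of 1] by simp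
  show "\<forall>i<n. bivariate_normal (Qc (mx i) (sx i) (my i)) \<and> 0 \<le> w i"
    unfolding bivariate_normal_def using Q s w by (metis abs_zero zero_less_one)
  show "(\<Sum>i<n. w i) = 1" using ok by (simp add: mixok_def)
  show "\<forall>A\<in>sets borel. emeasure (MixM n w mx sx my) A = (\<Sum>i<n. ennreal (w i) * emeasure (Qc (mx i) (sx i) (my i)) A)"
    using emeasure_MixM[OF ok] by blast
qed



lemma measure_NM_le: "0 < s \<Longrightarrow> measure (NM a s) {..x} = Phi ((x - a) / s)"
  using Psi_affine[of s a x] by (simp add: Psi_def)

lemma measure_NM_UNIV: "0 < s \<Longrightarrow> measure (NM a s) UNIV = 1"
  using prob_space.prob_space[OF prob_NM[of s a]] by (simp add: NM_def)

lemma measure_NM_gt: assumes "0 < s" shows "measure (NM a s) {v<..} = 1 - Phi ((v - a) / s)"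
proof -
  interpret prob_space "NM a s" by (rule prob_NM[OF assms])
  have "{v<..} = space (NM a s) - {..v}" by (auto simp: NM_def)
  then have "measure (NM a s) {v<..} = 1 - measure (NM a s) {..v}" by (simp add: prob_compl)
  then show ?thesis using measure_NM_le[OF assms] by simp
qed

definition GX :: "nat \<Rightarrow> (nat\<Rightarrow>real) \<Rightarrow> (nat\<Rightarrow>real) \<Rightarrow> (nat\<Rightarrow>real) \<Rightarrow> real \<Rightarrow> real" where
  "GX n w mx sx x = (\<Sum>i<n. w i * Phi ((x - mx i) / sx i))"

lemma cdflike_GX: "mixok n w sx \<Longrightarrow> cdflike (GX n w mx sx)"
  unfolding GX_def mixok_def by (rule cdflike_sum) auto

lemma fst_le_MixM: assumes ok: "mixok n w sx"
  shows "measure (MixM n w mx sx my) {p. fst p \<le> x} = GX n w mx sx x"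
proof -
  have s: "\<And>i. i < n \<Longrightarrow> 0 < sx i" using ok by (auto simp: mixok_def)
  have "{p::real\<times>real. fst p \<le> x} = {p. fst p \<in> {..x} \<and> snd p \<in> UNIV}" by auto
  then show ?thesis using measure_MixM_rect[OF ok, of "{..x}" UNIV mx my]
    by (simp add: GX_def measure_NM_le measure_NM_UNIV s)
qed

lemma VaR_X_MixM: assumes ok: "mixok n w sx" and b: "0 < b" "b < 1"
  shows "GX n w mx sx (VaR_X b (MixM n w mx sx my)) = b"
proof -
  have "VaR_X b (MixM n w mx sx my) = cdf_VaR (GX n w mx sx) b"
    unfolding VaR_X_def using fst_le_MixM[OF ok] by presburger
  then show ?thesis using quantile_char[OF cdflike_GX[OF ok] b] by simp
qed

lemma cond_cdf_MixM: assumes ok: "mixok n w sx" and b: "0 < b" "b < 1"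
  and v: "v = VaR_X b (MixM n w mx sx my)"
  shows "cond_cdf b (MixM n w mx sx my) y = (\<Sum>i<n. (w i * (1 - Phi ((v - mx i) / sx i)) / (1 - b)) * Phi (y - my i))"
proof -
  have s: "\<And>i. i < n \<Longrightarrow> 0 < sx i" and w: "\<And>i. i < n \<Longrightarrow> 0 \<le> w i" and sw: "(\<Sum>i<n. w i) = 1"
    using ok by (auto simp: mixok_def)
  have G: "GX n w mx sx v = b" using VaR_X_MixM[OF ok b] v by simp
  have "{p::real\<times>real. fst p > v} = {p. fst p \<in> {v<..} \<and> snd p \<in> UNIV}" by auto
  then have "measure (MixM n w mx sx my) {p. fst p > v} = (\<Sum>i<n. w i * (1 - Phi ((v - mx i) / sx i)))"
    using measure_MixM_rect[OF ok, of "{v<..}" UNIV mx my]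
    by (simp add: measure_NM_gt measure_NM_UNIV s)
  also have "\<dots> = 1 - b" using G sw by (simp add: GX_def right_diff_distrib sum_subtractf)
  finally have pgt: "measure (MixM n w mx sx my) {p. fst p > v} = 1 - b" .
  have "{p::real\<times>real. snd p \<le> y \<and> fst p > v} = {p. fst p \<in> {v<..} \<and> snd p \<in> {..y}}" by auto
  then have "measure (MixM n w mx sx my) {p. snd p \<le> y \<and> fst p > v} = (\<Sum>i<n. w i * (1 - Phi ((v - mx i) / sx i)) * Phi (y - my i))"
    using measure_MixM_rect[OF ok, of "{v<..}" "{..y}" mx my]
    by (simp add: measure_NM_gt measure_NM_le s)
  then show ?thesis
    unfolding cond_cdf_def Let_def v[symmetric] pgt
    by (simp add: sum_divide_distrib)
qed



definition Hp :: "real \<Rightarrow> real \<Rightarrow> real" where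
  "Hp p y = p * Phi (y - 1) + (1 - p) * Phi y"

definition Qp :: "real \<Rightarrow> real \<Rightarrow> real" where
  "Qp p g = cdf_VaR (Hp p) g"

lemma cdflike_Hp: assumes "0 \<le> p" "p \<le> 1" shows "cdflike (Hp p)"
proof -
  have "cdflike (\<lambda>x. \<Sum>i\<in>{0::nat,1}. (if i = 0 then p else 1 - p) * Phi ((x - (if i = 0 then 1 else 0)) / 1))"
    by (rule cdflike_sum) (use assms in auto)
  moreover have "(\<lambda>x. \<Sum>i\<in>{0::nat,1}. (if i = 0 then p else 1 - p) * Phi ((x - (if i = 0 then 1 else 0)) / 1)) = Hp p"
    by (auto simp: Hp_def fun_eq_iff)
  ultimately show ?thesis by simp
qed

lemma Hp_Qp: "0 \<le> p \<Longrightarrow> p \<le> 1 \<Longrightarrow> 0 < g \<Longrightarrow> g < 1 \<Longrightarrow> Hp p (Qp p g) = g"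
  unfolding Qp_def by (rule quantile_char[OF cdflike_Hp])

lemma Hp_strict: "0 \<le> p \<Longrightarrow> p \<le> 1 \<Longrightarrow> x < y \<Longrightarrow> Hp p x < Hp p y"
  using cdflike_Hp by (auto simp: cdflike_def)

lemma Qp_less: assumes a: "0 \<le> a" "a < p" "p \<le> 1" and g: "0 < g" "g < 1"
  shows "Qp a g < Qp p g"
proof (rule ccontr)
  let ?q = "Qp p g"
  assume "\<not> Qp a g < ?q"
  then have le: "?q \<le> Qp a g" by simp
  have "Hp p ?q = g" by (rule Hp_Qp) (use a g in auto)
  moreover have "Hp p ?q < Hp a ?q"
  proof -
    have "Phi (?q - 1) < Phi ?q" by (rule Phi_strict) simp
    then have "0 < (p - a) * (Phi ?q - Phi (?q - 1))" using a by simp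
    then show ?thesis by (simp add: Hp_def algebra_simps)
  qed
  moreover have "Hp a ?q \<le> Hp a (Qp a g)"
    using le Hp_strict[of a ?q "Qp a g"] a by (cases "?q = Qp a g") auto
  moreover have "Hp a (Qp a g) = g" by (rule Hp_Qp) (use a g in auto)
  ultimately show False by simp
qed

lemma Qp_mono: assumes p: "0 \<le> p" "p \<le> 1" and g: "0 < g" "g \<le> g'" "g' < 1"
  shows "Qp p g \<le> Qp p g'"
proof (rule ccontr)
  assume "\<not> Qp p g \<le> Qp p g'"
  then have "Hp p (Qp p g') < Hp p (Qp p g)" using Hp_strict[OF p] by simp
  then show False using Hp_Qp[OF p] g by simp
qed

lemma Qp_bound: assumes p: "0 \<le> p" "p \<le> 1" and g: "0 < g" "g < 1"
  shows "\<bar>Qp p g\<bar> \<le> 2 / sqrt (1 - g) + 1 / sqrt g"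
proof -
  let ?q = "Qp p g"
  have H: "Hp p ?q = g" by (rule Hp_Qp) (use p g in auto)
  have P1: "Phi (?q - 1) \<le> Phi ?q" by (rule Phi_mono) simp
  have m1: "(1 - p) * Phi (?q - 1) \<le> (1 - p) * Phi ?q" by (rule mult_left_mono) (use P1 p in auto)
  have m2: "p * Phi (?q - 1) \<le> p * Phi ?q" by (rule mult_left_mono) (use P1 p in auto)
  have e1: "p * Phi (?q - 1) + (1 - p) * Phi (?q - 1) = Phi (?q - 1)" by (simp add: algebra_simps)
  have e2: "p * Phi ?q + (1 - p) * Phi ?q = Phi ?q" by (simp add: algebra_simps)
  have lo: "Phi (?q - 1) \<le> g" using H m1 e1 unfolding Hp_def by linarith
  have hi: "g \<le> Phi ?q" using H m2 e2 unfolding Hp_def by linarith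
  have s1: "1 \<le> 1 / sqrt (1 - g)" using g by (simp add: real_sqrt_le_1_iff)
  have s2: "0 < 1 / sqrt g" using g by simp
  have up: "?q \<le> 2 / sqrt (1 - g)"
  proof (cases "?q > 1")
    case True
    have "1 - g \<le> 1 / (?q - 1)\<^sup>2" using Phi_upper_tail[of "?q - 1"] True lo by simp
    then have "(?q - 1)\<^sup>2 \<le> 1 / (1 - g)" using True g
      by (simp add: field_simps)
    then have "sqrt ((?q - 1)\<^sup>2) \<le> sqrt (1 / (1 - g))" by (rule real_sqrt_le_mono)
    then have "?q - 1 \<le> 1 / sqrt (1 - g)" using True by (simp add: real_sqrt_divide)
    then show ?thesis using s1 by simp
  next
    case False then show ?thesis using s1 by simp
  qed
  have dn: "- ?q \<le> 1 / sqrt g"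
  proof (cases "?q < 0")
    case True
    have "g \<le> 1 / ?q\<^sup>2" using Phi_lower_tail[OF True] hi by simp
    then have "?q\<^sup>2 \<le> 1 / g" using True g by (simp add: field_simps)
    then have "sqrt (?q\<^sup>2) \<le> sqrt (1 / g)" by (rule real_sqrt_le_mono)
    then show ?thesis using True by (simp add: real_sqrt_divide)
  next
    case False then show ?thesis using s2 by linarith
  qed
  show ?thesis using up dn s1 s2 by linarith
qed



lemma inv_sqrt_powr: "0 < t \<Longrightarrow> t powr (1/2 - 1) = 1 / sqrt t"
proof -
  assume t: "0 < t"
  have e: "1/2 - 1 = - (1/2::real)" by simp
  have "t powr (1/2 - 1) = inverse (t powr (1/2))" unfolding e by (rule powr_minus)
  also have "\<dots> = 1 / sqrt t" using t by (simp only: powr_half_sqrt less_imp_le inverse_eq_divide)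
  finally show ?thesis .
qed



lemma inv_sqrt_powr': "0 < t \<Longrightarrow> t powr - (1/2) = 1 / sqrt t"
  using inv_sqrt_powr[of t] by simp

lemma bound_int: "set_integrable lborel {0<..<1::real} (\<lambda>g. 2 / sqrt (1 - g) + 1 / sqrt g)"
proof -
  have b1: "set_integrable lborel {0<..<1::real} (\<lambda>t. t powr (1/2 - 1) * (1 - t) powr (1 - 1))"
    by (rule set_integrable_subset[OF integrable_Beta[of "1/2" 1]]) auto
  have b1': "set_integrable lborel {0<..<1::real} (\<lambda>t. 1 / sqrt t)"
    by (rule iffD1[OF set_integrable_cong b1]) (auto simp: inv_sqrt_powr')
  have b2: "set_integrable lborel {0<..<1::real} (\<lambda>t. t powr (1 - 1) * (1 - t) powr (1/2 - 1))"
    by (rule set_integrable_subset[OF integrable_Beta[of 1 "1/2"]]) auto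
  have b2': "set_integrable lborel {0<..<1::real} (\<lambda>t. 2 * (1 / sqrt (1 - t)))"
    by (intro set_integrable_mult_right, rule iffD1[OF set_integrable_cong b2]) (auto simp: inv_sqrt_powr')
  show ?thesis using set_integral_add(1)[OF b2' b1'] by simp
qed

lemma Qp_meas: assumes "0 \<le> p" "p \<le> 1" "0 \<le> a"
  shows "set_borel_measurable lborel {a<..<1} (Qp p)"
proof -
  have "mono_on {a<..<1} (Qp p)"
    by (rule mono_onI, rule Qp_mono) (use assms in auto)
  then have "Qp p \<in> borel_measurable (restrict_space borel {a<..<1})"
    by (rule borel_measurable_mono_on_fnc)
  then have "Qp p \<in> borel_measurable (restrict_space lborel {a<..<1})"
    by (subst measurable_cong_sets[where M'="restrict_space borel {a<..<1}" and N'=borel]) (auto simp: sets_restrict_space)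
  then show ?thesis unfolding set_borel_measurable_def
    by (subst (asm) borel_measurable_restrict_space_iff) auto
qed

lemma Qp_int: assumes p: "0 \<le> p" "p \<le> 1" and a: "0 \<le> a"
  shows "set_integrable lborel {a<..<1} (Qp p)"
proof (rule set_integrable_bound[OF _ Qp_meas[OF p a]])
  show "set_integrable lborel {a<..<1} (\<lambda>g. 2 / sqrt (1 - g) + 1 / sqrt g)"
    by (rule set_integrable_subset[OF bound_int]) (use a in auto)
  show "AE x in lborel. x \<in> {a<..<1} \<longrightarrow> norm (Qp p x) \<le> norm (2 / sqrt (1 - x) + 1 / sqrt x)"
  proof (intro AE_I2 impI)
    fix x assume x: "x \<in> {a<..<1}"
    then have "\<bar>Qp p x\<bar> \<le> 2 / sqrt (1 - x) + 1 / sqrt x" using Qp_bound[OF p, of x] a by auto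
    moreover have "0 \<le> 2 / sqrt (1 - x) + 1 / sqrt x" using x a by auto
    ultimately show "norm (Qp p x) \<le> norm (2 / sqrt (1 - x) + 1 / sqrt x)" by simp
  qed
qed


lemma ext_integral_eq:
  assumes int: "set_integrable lborel A f" and A: "A \<in> sets borel"
  shows "ext_integral A f = ereal (LINT x:A|lborel. f x)"
proof -
  let ?h = "\<lambda>x. indicator A x *\<^sub>R f x"
  have ih: "integrable lborel ?h" using int by (simp add: set_integrable_def)
  have pp: "(\<integral>\<^sup>+x\<in>A. ennreal (f x) \<partial>lborel) = (\<integral>\<^sup>+x. ennreal (?h x) \<partial>lborel)"
    by (intro nn_integral_cong) (auto simp: indicator_def)
  have nn: "(\<integral>\<^sup>+x\<in>A. ennreal (- f x) \<partial>lborel) = (\<integral>\<^sup>+x. ennreal (- ?h x) \<partial>lborel)"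
    by (intro nn_integral_cong) (auto simp: indicator_def)
  have f1: "(\<integral>\<^sup>+x. ennreal (?h x) \<partial>lborel) \<noteq> \<infinity>" and f2: "(\<integral>\<^sup>+x. ennreal (- ?h x) \<partial>lborel) \<noteq> \<infinity>"
    using integrableD[OF ih] by auto
  have "(LINT x:A|lborel. f x) = enn2real (\<integral>\<^sup>+x. ennreal (?h x) \<partial>lborel) - enn2real (\<integral>\<^sup>+x. ennreal (- ?h x) \<partial>lborel)"
    unfolding set_lebesgue_integral_def by (rule real_lebesgue_integral_def[OF ih])
  moreover have "ext_integral A f = enn2ereal (\<integral>\<^sup>+x. ennreal (?h x) \<partial>lborel) - enn2ereal (\<integral>\<^sup>+x. ennreal (- ?h x) \<partial>lborel)"
    unfolding ext_integral_def Let_def pp nn using f1 by simp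
  moreover obtain r1 where r1: "0 \<le> r1" "(\<integral>\<^sup>+x. ennreal (?h x) \<partial>lborel) = ennreal r1"
    using f1 by (cases "(\<integral>\<^sup>+x. ennreal (?h x) \<partial>lborel)") auto
  moreover obtain r2 where r2: "0 \<le> r2" "(\<integral>\<^sup>+x. ennreal (- ?h x) \<partial>lborel) = ennreal r2"
    using f2 by (cases "(\<integral>\<^sup>+x. ennreal (- ?h x) \<partial>lborel)") auto
  ultimately show ?thesis by simp
qed



lemma Qp_integral_less:
  assumes a: "0 \<le> a'" "a' < p" "p \<le> 1" and b: "0 \<le> b" "b < 1"
  shows "(LINT g:{b<..<1}|lborel. Qp a' g) < (LINT g:{b<..<1}|lborel. Qp p g)"
proof -
  have i1: "set_integrable lborel {b<..<1} (Qp a')" by (rule Qp_int) (use a b in auto)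
  have i2: "set_integrable lborel {b<..<1} (Qp p)" by (rule Qp_int) (use a b in auto)
  have pos: "\<And>g. g \<in> {b<..<1} \<Longrightarrow> 0 < Qp p g - Qp a' g"
    using Qp_less a b by auto
  let ?h = "\<lambda>g. indicator {b<..<1} g *\<^sub>R (Qp p g - Qp a' g)"
  have ih: "integrable lborel ?h" using set_integral_diff(1)[OF i2 i1] by (simp add: set_integrable_def)
  have nn: "AE g in lborel. 0 \<le> ?h g" using pos by (auto simp: indicator_def less_imp_le)
  have "integral\<^sup>L lborel ?h \<noteq> 0"
  proof
    assume "integral\<^sup>L lborel ?h = 0"
    then have "AE g in lborel. ?h g = 0" using integral_nonneg_eq_0_iff_AE[OF ih nn] by simp
    then have "AE g in lborel. g \<notin> {b<..<1}"
      by (rule eventually_mono) (use pos in \<open>force simp: indicator_def\<close>)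
    then have "emeasure lborel {b<..<1} = 0"
      by (subst (asm) AE_iff_measurable[where N="{b<..<1}"]) auto
    with b show False by simp
  qed
  moreover have "0 \<le> integral\<^sup>L lborel ?h" using nn by (rule integral_nonneg_AE)
  moreover have "integral\<^sup>L lborel ?h = (LINT g:{b<..<1}|lborel. Qp p g) - (LINT g:{b<..<1}|lborel. Qp a' g)"
    using set_integral_diff(2)[OF i2 i1] by (simp add: set_lebesgue_integral_def)
  ultimately show ?thesis by linarith
qed

lemma CxLS_contra:
  fixes T :: "(real \<times> real) measure \<Rightarrow> ereal" and d0 d1 d :: "real \<times> real \<Rightarrow> real"
  assumes F0: "F0 = density lborel (\<lambda>p. ennreal (d0 p))" and F1: "F1 = density lborel (\<lambda>p. ennreal (d1 p))"
    and Fm: "Fm = density lborel (\<lambda>p. ennreal (d p))"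
    and dd: "\<And>p. d p = d0 p / 2 + d1 p / 2"
    and [measurable]: "d0 \<in> borel_measurable borel" "d1 \<in> borel_measurable borel"
    and nn: "\<And>p. 0 \<le> d0 p" "\<And>p. 0 \<le> d1 p"
    and C: "F0 \<in> C" "F1 \<in> C" "Fm \<in> C"
    and T: "T F0 = ereal t" "T F1 = ereal t" "T Fm = ereal t'" "t \<noteq> t'"
  shows "\<not> (\<exists>V :: real \<Rightarrow> real \<times> real \<Rightarrow> 'b::{banach,second_countable_topology}. strict_identification V T C) \<and> \<not> elicitable T C"
proof -
  have dm[measurable]: "d \<in> borel_measurable borel" unfolding dd[abs_def] by measurable
  have dnn: "\<And>p. 0 \<le> d p" using nn dd by simp
  have lin: "integrable Fm f \<and> (\<integral>x. f x \<partial>Fm) = (\<integral>x. f x \<partial>F0) / 2 + (\<integral>x. f x \<partial>F1) / 2"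
    if i0: "integrable F0 f" and i1: "integrable F1 f" for f :: "real \<times> real \<Rightarrow> real"
  proof -
    have fm[measurable]: "f \<in> borel_measurable borel"
      using borel_measurable_integrable[OF i0] F0 by (simp cong: measurable_cong_sets)
    have j0: "integrable lborel (\<lambda>x. d0 x *\<^sub>R f x)" using i0 F0 nn by (simp add: integrable_density)
    have j1: "integrable lborel (\<lambda>x. d1 x *\<^sub>R f x)" using i1 F1 nn by (simp add: integrable_density)
    have eq: "(\<lambda>x. d x *\<^sub>R f x) = (\<lambda>x. (d0 x *\<^sub>R f x) / 2 + (d1 x *\<^sub>R f x) / 2)"
      by (auto simp: dd fun_eq_iff algebra_simps)
    have jm: "integrable lborel (\<lambda>x. d x *\<^sub>R f x)" unfolding eq using j0 j1 by auto
    show ?thesis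
    proof
      show "integrable Fm f" using jm Fm dnn by (simp add: integrable_density)
      have "(\<integral>x. f x \<partial>Fm) = (\<integral>x. d x *\<^sub>R f x \<partial>lborel)" using Fm dnn by (simp add: integral_density)
      also have "\<dots> = (\<integral>x. d0 x *\<^sub>R f x \<partial>lborel) / 2 + (\<integral>x. d1 x *\<^sub>R f x \<partial>lborel) / 2"
        unfolding eq using j0 j1 by simp
      also have "\<dots> = (\<integral>x. f x \<partial>F0) / 2 + (\<integral>x. f x \<partial>F1) / 2"
        using F0 F1 nn by (simp add: integral_density)
      finally show "(\<integral>x. f x \<partial>Fm) = (\<integral>x. f x \<partial>F0) / 2 + (\<integral>x. f x \<partial>F1) / 2" .
    qed
  qed
  have linV: "(\<integral>x. f x \<partial>Fm) = (1/2::real) *\<^sub>R (\<integral>x. f x \<partial>F0) + (1/2::real) *\<^sub>R (\<integral>x. f x \<partial>F1)"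
    if i0: "integrable F0 f" and i1: "integrable F1 f" for f :: "real \<times> real \<Rightarrow> 'b"
  proof -
    have fm[measurable]: "f \<in> borel_measurable borel"
      using borel_measurable_integrable[OF i0] F0 by (simp cong: measurable_cong_sets)
    have j0: "integrable lborel (\<lambda>x. d0 x *\<^sub>R f x)" using i0 F0 nn by (simp add: integrable_density)
    have j1: "integrable lborel (\<lambda>x. d1 x *\<^sub>R f x)" using i1 F1 nn by (simp add: integrable_density)
    have eq: "(\<lambda>x. d x *\<^sub>R f x) = (\<lambda>x. (1/2::real) *\<^sub>R (d0 x *\<^sub>R f x) + (1/2::real) *\<^sub>R (d1 x *\<^sub>R f x))"
      by (auto simp: dd fun_eq_iff algebra_simps scaleR_add_left)
    have "(\<integral>x. f x \<partial>Fm) = (\<integral>x. d x *\<^sub>R f x \<partial>lborel)" using Fm dnn by (simp add: integral_density)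
    also have "\<dots> = (\<integral>x. (1/2::real) *\<^sub>R (d0 x *\<^sub>R f x) \<partial>lborel) + (\<integral>x. (1/2::real) *\<^sub>R (d1 x *\<^sub>R f x) \<partial>lborel)"
      unfolding eq by (rule Bochner_Integration.integral_add) (use integrable_scaleR_right[OF j0, of "1/2"] integrable_scaleR_right[OF j1, of "1/2"] in auto)
    also have "\<dots> = (1/2::real) *\<^sub>R (\<integral>x. d0 x *\<^sub>R f x \<partial>lborel) + (1/2::real) *\<^sub>R (\<integral>x. d1 x *\<^sub>R f x \<partial>lborel)"
      by (simp only: integral_scaleR_right)
    also have "\<dots> = (1/2::real) *\<^sub>R (\<integral>x. f x \<partial>F0) + (1/2::real) *\<^sub>R (\<integral>x. f x \<partial>F1)"
      using F0 F1 nn by (simp add: integral_density)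
    finally show ?thesis .
  qed
  have "\<not> strict_identification V T C" for V :: "real \<Rightarrow> real \<times> real \<Rightarrow> 'b"
  proof
    assume SI: "strict_identification V T C"
    have i0: "integrable F0 (V t)" "(\<integral>y. V t y \<partial>F0) = 0" using SI C T unfolding strict_identification_def by auto
    have i1: "integrable F1 (V t)" "(\<integral>y. V t y \<partial>F1) = 0" using SI C T unfolding strict_identification_def by auto
    have "(\<integral>y. V t y \<partial>Fm) = 0" using linV[OF i0(1) i1(1)] i0 i1 by simp
    then have "T Fm = ereal t" using SI C unfolding strict_identification_def by auto
    with T show False by simp
  qed
  moreover have "\<not> elicitable T C"
  proof
    assume "elicitable T C"
    then obtain S where SC: "strictly_consistent S T C" unfolding elicitable_def by blast
    have I: "\<And>F r. F \<in> C \<Longrightarrow> integrable F (S r)" using SC unfolding strictly_consistent_def by auto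
    have L: "\<And>F u r. F \<in> C \<Longrightarrow> T F = ereal u \<Longrightarrow> r \<noteq> u \<Longrightarrow> (\<integral>y. S u y \<partial>F) < (\<integral>y. S r y \<partial>F)"
      using SC unfolding strictly_consistent_def by blast
    have a0: "(\<integral>y. S t y \<partial>F0) < (\<integral>y. S t' y \<partial>F0)" using L[OF C(1) T(1)] T(4) by auto
    have a1: "(\<integral>y. S t y \<partial>F1) < (\<integral>y. S t' y \<partial>F1)" using L[OF C(2) T(2)] T(4) by auto
    have am: "(\<integral>y. S t' y \<partial>Fm) < (\<integral>y. S t y \<partial>Fm)" using L[OF C(3) T(3)] T(4) by auto
    have "(\<integral>y. S t y \<partial>Fm) < (\<integral>y. S t' y \<partial>Fm)"
      using lin[OF I[OF C(1)] I[OF C(2)], of t] lin[OF I[OF C(1)] I[OF C(2)], of t'] a0 a1 by simp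
    with am show False by simp
  qed
  ultimately show ?thesis by blast
qed



lemma sum2: "(\<Sum>i<(2::nat). f i) = f 0 + f 1"
  by (simp add: numeral_eq_Suc lessThan_Suc add_ac)

lemma sum4: "(\<Sum>i<(4::nat). f i) = f 0 + f 1 + f 2 + f 3"
  by (simp add: numeral_eq_Suc lessThan_Suc add_ac)

lemma half_lemma: "b < 1 \<Longrightarrow> (1 - b) * x / (2 - 2 * b) = x / (2::real)"
  by (simp add: field_simps)

definition "w2 = (\<lambda>_::nat. 1/2::real)"
definition "my2 = (\<lambda>i::nat. if i = 0 then 1 else 0::real)"
definition "mx1 z = (\<lambda>i::nat. if i = 0 then 0 else -z::real)"
definition "sx1 = (\<lambda>i::nat. if i = 0 then 1 else 2::real)"
definition "w4 = (\<lambda>_::nat. 1/4::real)"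
definition "mxm z = (\<lambda>i::nat. if i < 2 then 1 else if i = 2 then 0 else -z::real)"
definition "sxm = (\<lambda>i::nat. if i = 3 then 2 else 1::real)"
definition "mym = (\<lambda>i::nat. if i = 0 \<or> i = 2 then 1 else 0::real)"

definition "DF0 = MixM 2 w2 (\<lambda>_. 1) (\<lambda>_. 1) my2"
definition "DF1 z = MixM 2 w2 (mx1 z) sx1 my2"
definition "DFm z = MixM 4 w4 (mxm z) sxm mym"

lemma ok0: "mixok 2 w2 (\<lambda>_. 1)" by (simp add: mixok_def w2_def sum2)
lemma ok1: "mixok 2 w2 sx1" by (simp add: mixok_def w2_def sx1_def sum2)
lemma okm: "mixok 4 w4 sxm" by (simp add: mixok_def w4_def sxm_def sum4)

lemma mixd_mid: "mixd 4 w4 (mxm z) sxm mym p = mixd 2 w2 (\<lambda>_. 1) (\<lambda>_. 1) my2 p / 2 + mixd 2 w2 (mx1 z) sx1 my2 p / 2"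
  by (simp add: mixd_def sum2 sum4 w4_def w2_def mxm_def sxm_def mym_def mx1_def sx1_def my2_def field_simps)

lemma cond0: assumes b: "0 < b" "b < 1" shows "cond_cdf b DF0 = Hp (1/2)"
proof
  fix y
  define v where "v = VaR_X b DF0"
  have G: "GX 2 w2 (\<lambda>_. 1) (\<lambda>_. 1) v = b" unfolding v_def DF0_def by (rule VaR_X_MixM[OF ok0 b])
  then have Pv: "Phi (v - 1) = b" by (simp add: GX_def sum2 w2_def)
  show "cond_cdf b DF0 y = Hp (1/2) y"
    unfolding DF0_def cond_cdf_MixM[OF ok0 b v_def[unfolded DF0_def]]
    using Pv b by (simp add: sum2 w2_def my2_def Hp_def half_lemma)
qed

lemma cond1: assumes b: "0 < b" "b < 1" and z: "Phi z = b" shows "cond_cdf b (DF1 z) = Hp (1/2)"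
proof
  fix y
  define v where "v = VaR_X b (DF1 z)"
  have G: "GX 2 w2 (mx1 z) sx1 v = b" unfolding v_def DF1_def by (rule VaR_X_MixM[OF ok1 b])
  have Gz: "GX 2 w2 (mx1 z) sx1 z = b" using z by (simp add: GX_def sum2 w2_def mx1_def sx1_def)
  have "v = z"
  proof -
    have sm: "\<And>x y. x < y \<Longrightarrow> GX 2 w2 (mx1 z) sx1 x < GX 2 w2 (mx1 z) sx1 y"
      using cdflike_GX[OF ok1] by (auto simp: cdflike_def)
    show ?thesis using sm[of v z] sm[of z v] G Gz by (cases "v < z"; cases "z < v") auto
  qed
  show "cond_cdf b (DF1 z) y = Hp (1/2) y"
    unfolding DF1_def cond_cdf_MixM[OF ok1 b v_def[unfolded DF1_def]]
    using z b \<open>v = z\<close> by (simp add: sum2 w2_def my2_def mx1_def sx1_def Hp_def half_lemma)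
qed

lemma condm: assumes b: "0 < b" "b < 1" and z: "Phi z = b"
  shows "\<exists>a. 0 \<le> a \<and> a < 1/2 \<and> cond_cdf b (DFm z) = Hp a"
proof -
  define v where "v = VaR_X b (DFm z)"
  have G: "GX 4 w4 (mxm z) sxm v = b" unfolding v_def DFm_def by (rule VaR_X_MixM[OF okm b])
  then have G': "Phi (v - 1) / 4 + Phi (v - 1) / 4 + Phi v / 4 + Phi ((v + z) / 2) / 4 = b"
    by (simp add: GX_def sum4 w4_def mxm_def sxm_def)
  have "GX 4 w4 (mxm z) sxm z < b"
  proof -
    have "Phi (z - 1) < Phi z" by (rule Phi_strict) simp
    then show ?thesis using z by (simp add: GX_def sum4 w4_def mxm_def sxm_def)
  qed
  have "z < v"
  proof (rule ccontr)
    assume "\<not> z < v"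
    have sm: "\<forall>x y. x < y \<longrightarrow> GX 4 w4 (mxm z) sxm x < GX 4 w4 (mxm z) sxm y"
      using cdflike_GX[OF okm, of "mxm z"] by (simp add: cdflike_def)
    have "GX 4 w4 (mxm z) sxm v \<le> GX 4 w4 (mxm z) sxm z"
      using sm[rule_format, of v z] \<open>\<not> z < v\<close> by (cases "v = z") auto
    with G \<open>GX 4 w4 (mxm z) sxm z < b\<close> show False by simp
  qed
  define c0 where "c0 = 1/4 * (1 - Phi (v - 1)) / (1 - b)"
  define c2 where "c2 = 1/4 * (1 - Phi v) / (1 - b)"
  define c3 where "c3 = 1/4 * (1 - Phi ((v + z) / 2)) / (1 - b)"
  have sum1: "c0 + c0 + c2 + c3 = 1"
  proof -
    have e1: "c0 + c0 + c2 + c3 = (1/4 * (1 - Phi (v - 1)) + 1/4 * (1 - Phi (v - 1)) + 1/4 * (1 - Phi v) + 1/4 * (1 - Phi ((v + z) / 2))) / (1 - b)"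
      unfolding c0_def c2_def c3_def by (simp only: add_divide_distrib)
    have e2: "1/4 * (1 - Phi (v - 1)) + 1/4 * (1 - Phi (v - 1)) + 1/4 * (1 - Phi v) + 1/4 * (1 - Phi ((v + z) / 2)) = 1 - b"
      unfolding right_diff_distrib using G' by linarith
    show ?thesis unfolding e1 e2 using b by simp
  qed
  have c23: "c2 < c3"
  proof -
    have "Phi ((v + z) / 2) < Phi v" by (rule Phi_strict) (use \<open>z < v\<close> in simp)
    then show ?thesis unfolding c2_def c3_def using b by (simp add: divide_strict_right_mono)
  qed
  have c0nn: "0 \<le> c0" and c2nn: "0 \<le> c2" unfolding c0_def c2_def using b Phi_bounds by auto
  have cc: "cond_cdf b (DFm z) y = (c0 + c2) * Phi (y - 1) + (c0 + c3) * Phi y" for y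
    unfolding DFm_def cond_cdf_MixM[OF okm b v_def[unfolded DFm_def]]
    by (simp add: sum4 w4_def mxm_def sxm_def mym_def c0_def c2_def c3_def distrib_right add_ac)
  show ?thesis
  proof (intro exI conjI)
    show "0 \<le> c0 + c2" using c0nn c2nn by simp
    show "c0 + c2 < 1/2" using sum1 c23 by linarith
    show "cond_cdf b (DFm z) = Hp (c0 + c2)"
    proof -
      have e: "1 - (c0 + c2) = c0 + c3" using sum1 by linarith
      show ?thesis by (simp add: fun_eq_iff Hp_def cc e)
    qed
  qed
qed



lemma mixd_meas[measurable]: "mixd n w mx sx my \<in> borel_measurable borel"
  unfolding mixd_def[abs_def] by measurable

lemma values_from_cond:
  assumes c: "cond_cdf b F = Hp p" and p: "0 \<le> p" "p \<le> 1" and a: "0 < a" "a < 1"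
  shows "CoVaR a b F = Qp p a"
    and "CoES a b F = ereal ((LINT g:{a<..<1}|lborel. Qp p g) / (1 - a))"
    and "MES b F = ereal (LINT g:{0<..<1}|lborel. Qp p g)"
proof -
  have Q: "(\<lambda>g. CoVaR g b F) = Qp p" by (simp add: fun_eq_iff CoVaR_def c Qp_def)
  show "CoVaR a b F = Qp p a" using Q by (simp add: fun_eq_iff)
  have "ext_integral {a<..<1} (\<lambda>g. CoVaR g b F) = ereal (LINT g:{a<..<1}|lborel. Qp p g)"
    unfolding Q by (rule ext_integral_eq[OF Qp_int]) (use p a in auto)
  then show "CoES a b F = ereal ((LINT g:{a<..<1}|lborel. Qp p g) / (1 - a))"
    unfolding CoES_def by simp
  show "MES b F = ereal (LINT g:{0<..<1}|lborel. Qp p g)"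
    unfolding MES_def Q by (rule ext_integral_eq[OF Qp_int]) (use p in auto)
qed

theorem mainTheorem4:
  fixes \<alpha> \<beta> :: real and C :: "(real \<times> real) measure set"
  assumes "0 < \<alpha>" "\<alpha> < 1" "0 < \<beta>" "\<beta> < 1"
    and "C \<subseteq> prob_dists2"
    and "\<And>P. normal_mixture P \<Longrightarrow> P \<in> C"
  shows "\<not> (\<exists>V :: real \<Rightarrow> real \<times> real \<Rightarrow> real ^ 'm. strict_identification V (\<lambda>F. ereal (CoVaR \<alpha> \<beta> F)) C)
       \<and> \<not> elicitable (\<lambda>F. ereal (CoVaR \<alpha> \<beta> F)) C
       \<and> \<not> (\<exists>V :: real \<Rightarrow> real \<times> real \<Rightarrow> real ^ 'm. strict_identification V (CoES \<alpha> \<beta>) C)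
       \<and> \<not> elicitable (CoES \<alpha> \<beta>) C
       \<and> \<not> (\<exists>V :: real \<Rightarrow> real \<times> real \<Rightarrow> real ^ 'm. strict_identification V (MES \<beta>) C)
       \<and> \<not> elicitable (MES \<beta>) C"
proof -
  note al = assms(1,2) and be = assms(3,4)
  have "Hp 0 = Phi" by (simp add: fun_eq_iff Hp_def)
  then obtain z where z: "Phi z = \<beta>" using quantile_exists[OF cdflike_Hp[of 0]] be by auto
  obtain a where a: "0 \<le> a" "a < 1/2" and cm: "cond_cdf \<beta> (DFm z) = Hp a"
    using condm[OF be z] by blast
  have c0: "cond_cdf \<beta> DF0 = Hp (1/2)" by (rule cond0[OF be])
  have c1: "cond_cdf \<beta> (DF1 z) = Hp (1/2)" by (rule cond1[OF be z])
  have C: "DF0 \<in> C" "DF1 z \<in> C" "DFm z \<in> C"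
    unfolding DF0_def DF1_def DFm_def
    by (intro assms(6) normal_mixture_MixM ok0 ok1 okm)+
  note dens = DF0_def[unfolded MixM_def] DF1_def[unfolded MixM_def] DFm_def[unfolded MixM_def]
    mixd_mid mixd_meas mixd_meas mixd_nonneg[OF ok0] mixd_nonneg[OF ok1]
  note v0 = values_from_cond[OF c0, simplified, OF al]
  note v1 = values_from_cond[OF c1, simplified, OF al]
  note vm = values_from_cond[OF cm, OF a(1) _ al] 
  have am: "a \<le> 1" using a by simp
  have l1: "Qp a \<alpha> < Qp (1/2) \<alpha>" by (rule Qp_less) (use a al in auto)
  have l2: "(LINT g:{\<alpha><..<1}|lborel. Qp a g) < (LINT g:{\<alpha><..<1}|lborel. Qp (1/2) g)"
    by (rule Qp_integral_less) (use a al in auto)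
  have l3: "(LINT g:{0<..<1}|lborel. Qp a g) < (LINT g:{0<..<1}|lborel. Qp (1/2) g)"
    by (rule Qp_integral_less) (use a in auto)
  have l2': "(LINT g:{\<alpha><..<1}|lborel. Qp (1/2) g) / (1 - \<alpha>) \<noteq> (LINT g:{\<alpha><..<1}|lborel. Qp a g) / (1 - \<alpha>)"
    using l2 al by (simp add: divide_strict_right_mono)
  have r1: "\<not> (\<exists>V :: real \<Rightarrow> real \<times> real \<Rightarrow> real ^ 'm. strict_identification V (\<lambda>F. ereal (CoVaR \<alpha> \<beta> F)) C)
       \<and> \<not> elicitable (\<lambda>F. ereal (CoVaR \<alpha> \<beta> F)) C"
    by (rule CxLS_contra[OF dens C]) (use v0 v1 vm[OF am] l1 in auto)
  have r2: "\<not> (\<exists>V :: real \<Rightarrow> real \<times> real \<Rightarrow> real ^ 'm. strict_identification V (CoES \<alpha> \<beta>) C)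
       \<and> \<not> elicitable (CoES \<alpha> \<beta>) C"
    by (rule CxLS_contra[OF dens C]) (use v0 v1 vm[OF am] l2' in auto)
  have r3: "\<not> (\<exists>V :: real \<Rightarrow> real \<times> real \<Rightarrow> real ^ 'm. strict_identification V (MES \<beta>) C)
       \<and> \<not> elicitable (MES \<beta>) C"
    by (rule CxLS_contra[OF dens C]) (use v0 v1 vm[OF am] l3 in auto)
  show ?thesis using r1 r2 r3 by blast
qed

end
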